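(* Under the good event $E$, the quantity $\widehat\lambda:=\left\|\widehat P\widehat M^{1/2}(\widehat P^\top\widehat f^* )^{\circ-1/2}\right\|_\infty^2$ satisfies $\widehat\lambda\le8\lambda$.
   Context: Two-stage causal MDP. Start state $0$, intermediate states $[k]$, terminal state. At each state $i\in\{0,\dots,k\}$: independent Bernoulli variables $X^i_1,\dots,X^i_n$, $q^i_j=\mathbb{P}\{X^i_j=1\}$ unknown; atomic interventions $\mathcal{I}_i=\{do()\}\cup\{do(X^i_j=0),do(X^i_j=1):j\in[n]\}$, $N=2n+1$ ($do(X^i_j=x)$ sets $X^i_j=x$, other variables drawn independently). Performing $a\in\mathcal{I}_0$ at state $0$ leads to $i\in[k]$ with unknown probability $P_{(a,i)}$ (depending stochastically on the realized $X^0$-values); $P\in\mathbb{R}^{N\times k}$, $p_+=\min\{P_{(a,i)}>0\}$. At state $i\in[k]$, after an intervention all $X^i_j$ and a reward $R_i\in\{0,1\}$ (law depending on the $X^i$-values) are observed; $\mathbb{E}[R_i\mid a]$ is the expected reward under $a\in\mathcal{I}_i$. Causal parameters: with $\bar q^i_j=\min(q^i_j,1-q^i_j)$ sorted as $\bar q^i_{(1)}\le\dots\le\bar q^i_{(n)}$, $m_i=\max\{j:\bar q^i_{(j)}<1/j\}$; $\mathcal{I}_{m_i}$ is the set of interventions setting a variable with $\bar q^i_{(j)}<1/j$ to its less likely value; $M=\mathrm{diag}(m_1,\dots,m_k)$. Frequency vectors: $f\in\mathbb{R}^N$, $f\ge0$, $\sum f_a=1$; $x^{\circ-1/2}$ is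 entrywise $x_i^{-1/2}$; $\lambda=\min_f\|PM^{1/2}(P^\top f)^{\circ-1/2}\|_\infty^2$. Algorithm ALG-CE with budget $T$ (estimates are empirical frequencies/means). Phase 1 ($T/3$ rounds): $T/6$ rounds of $do()$ at state $0$, giving estimates of $q^0_j$, $\widehat m_0$, $\mathcal{I}_{m_0}$, and $\widehat P_{(a,i)}$ for $a\notin\mathcal{I}_{m_0}$ (frequency of reaching $i$ among rounds whose $X^0$-values agree with $a$); then each $a\in\mathcal{I}_{m_0}$ is performed $T/(6|\mathcal{I}_{m_0}|)$ times to get $\widehat P_{(a,i)}$. Phase 2: $\tilde f\in\arg\max_f\min_i(\widehat P^\top f)_i$. Phase 3 ($T/3$ rounds): each $a\in\mathcal{I}_0$ performed $\frac12(\tilde f(a)+\frac1N)\frac T3$ times with $do()$ at the reached state, giving $\widehat m_i$, $\widehat M=\mathrm{diag}(\widehat m_1,\dots,\widehat m_k)$. Phase 4: $\widehat f^*\in\arg\min_f\|\widehat P\widehat M^{1/2}(\widehat P^\top f)^{\circ-1/2}\|_\infty$. Phase 5 ($T/3$ rounds): with $h(a)=\frac13(\widehat f^*(a)+\tilde f(a)+\frac1N)$, each $a$ performed $h(a)T/6$ times with $do()$ at the reached state (estimating $\mathcal{I}_{m_i}$ and $\widehat{\mathcal{R}}_{(b,i)}$ for $b\notin\mathcal{I}_{m_i}$ from rounds whose $X^i$-values agree with $b$), then $h(a)T/6$ times with round-robin over $b\in\mathcal{I}_{m_i}$ at the reached state $i$ (estimating $\widehat{\mathcal{R}}_{(b,i)}$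 for $b\in\mathcal{I}_{m_i}$). Output $\widehat\pi(i)\in\arg\max_b\widehat{\mathcal{R}}_{(b,i)}$, $\widehat\pi(0)\in\arg\max_a\sum_i\widehat P_{(a,i)}\widehat{\mathcal{R}}_{(\widehat\pi(i),i)}$. Good event $E=E_1\cap\dots\cap E_5$: ($E_1$) for every $a\in\mathcal{I}_0$, the transition estimates formed in each of Phases 1, 3, 5 satisfy $\sum_i|\widehat P_{(a,i)}-P_{(a,i)}|\le p_+/3$; ($E_2$) $\widehat m_0\in[\frac23m_0,2m_0]$; ($E_3$) $\widehat m_i\in[\frac23m_i,2m_i]$ for all $i\in[k]$ (for the estimates in Phases 3 and 5); ($E_4$) for all $a\in\mathcal{I}_0$, the Phase 1 estimates satisfy $\sum_i|\widehat P_{(a,i)}-P_{(a,i)}|\le\eta'$ with $\eta'=\sqrt{\frac{150m_0}{Tp_+}\log\frac{3T}{k}}$; ($E_5$) $|\mathbb{E}[R_i\mid a]-\widehat{\mathcal{R}}_{(a,i)}|\le\widehat\eta_i$ for all $i\in[k]$, $a\in\mathcal{I}_i$, with $\widehat\eta_i=\sqrt{\frac{27\widehat m_i}{T(\widehat P^\top\widehat f^* )_i}\log(2TN)}$. Here $\widehat P$ and $\widehat M$ denote the Phase 1 and Phase 3 estimates. *)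

theory Defs
  imports Complex_Main "HOL-Library.Extended_Real"
begin

(* Atomic interventions on n Bernoulli variables X_0..X_{n-1} (0-indexed) *)
datatype intervention = Obs | Do nat bool

definition interventions :: "nat \<Rightarrow> intervention set" where
  "interventions n = {Obs} \<union> {Do j x | j x. j < n}"

definition qbar :: "real \<Rightarrow> real" where
  "qbar x = min x (1 - x)"

definition sorted_qbar :: "(nat \<Rightarrow> real) \<Rightarrow> nat \<Rightarrow> real list" where
  "sorted_qbar q n = sort (map (\<lambda>j. qbar (q j)) [0..<n])"

definition mpar :: "(nat \<Rightarrow> real) \<Rightarrow> nat \<Rightarrow> nat" where
  "mpar q n = Max {j \<in> {1..n}. sorted_qbar q n ! (j - 1) < 1 / real j}"

definition freq_simplex :: "intervention set \<Rightarrow> (intervention \<Rightarrow> real) set" where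
  "freq_simplex I = {f. (\<forall>a\<in>I. 0 \<le> f a) \<and> (\<Sum>a\<in>I. f a) = 1}"

definition pplus :: "intervention set \<Rightarrow> (intervention \<Rightarrow> 's::finite \<Rightarrow> real) \<Rightarrow> real" where
  "pplus I P = Min {P a i | a i. a \<in> I \<and> P a i > 0}"

definition PTf :: "intervention set \<Rightarrow> (intervention \<Rightarrow> 's::finite \<Rightarrow> real)
                   \<Rightarrow> (intervention \<Rightarrow> real) \<Rightarrow> 's \<Rightarrow> real" where
  "PTf I P f i = (\<Sum>a\<in>I. f a * P a i)"

(* entrywise y^{-1/2}, with value +infinity at y = 0 (and the ereal convention 0 * infinity = 0) *)
definition inv_sqrt :: "real \<Rightarrow> ereal" where
  "inv_sqrt y = (if y > 0 then ereal (1 / sqrt y) else \<infinity>)"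

(* || P M^{1/2} (P^T f)^{o -1/2} ||_infty, M = diag(m) *)
definition obj :: "intervention set \<Rightarrow> (intervention \<Rightarrow> 's::finite \<Rightarrow> real)
                   \<Rightarrow> ('s \<Rightarrow> real) \<Rightarrow> (intervention \<Rightarrow> real) \<Rightarrow> ereal" where
  "obj I P m f = Max ((\<lambda>a. \<bar>\<Sum>i\<in>UNIV. ereal (P a i * sqrt (m i)) * inv_sqrt (PTf I P f i)\<bar>) ` I)"

definition lambda_par :: "intervention set \<Rightarrow> (intervention \<Rightarrow> 's::finite \<Rightarrow> real)
                   \<Rightarrow> ('s \<Rightarrow> real) \<Rightarrow> ereal" where
  "lambda_par I P m = (INF f\<in>freq_simplex I. obj I P m f) ^ 2"

end

theory Submission
  imports Defs
begin

lemma finite_interventions: "finite (interventions n)"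
proof -
  have "{Do j x | j x. j < n} = (\<lambda>(j,x). Do j x) ` ({..<n} \<times> UNIV)" by auto
  then show ?thesis unfolding interventions_def by simp
qed

lemma real_term:
  fixes ph p mh m sh s :: real
  assumes "0 \<le> p" "ph \<le> 4/3 * p" "0 \<le> ph" "0 \<le> m" "0 \<le> mh" "mh \<le> 2 * m" "0 < s" "2/3 * s \<le> sh"
  shows "ph * sqrt mh / sqrt sh \<le> (4/3 * sqrt 3) * (p * sqrt m / sqrt s)"
proof -
  have sh: "0 < sh" using assms by linarith
  have B: "ph * sqrt mh \<le> (4/3 * p) * (sqrt 2 * sqrt m)"
    apply (rule mult_mono) using assms by (auto simp flip: real_sqrt_mult)
  have C: "sqrt (2/3) * sqrt s \<le> sqrt sh" using assms by (simp flip: real_sqrt_mult)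
  have "ph * sqrt mh / sqrt sh \<le> (4/3 * p) * (sqrt 2 * sqrt m) / sqrt sh"
    by (rule divide_right_mono[OF B]) (use sh in simp)
  also have "\<dots> \<le> (4/3 * p) * (sqrt 2 * sqrt m) / (sqrt (2/3) * sqrt s)"
  proof (rule divide_left_mono[OF C])
    show "0 \<le> (4/3 * p) * (sqrt 2 * sqrt m)" using assms(1,4) by simp
    show "0 < sqrt sh * (sqrt (2/3) * sqrt s)" using sh assms(7) by simp
  qed
  also have "\<dots> = (4/3 * (sqrt 2 / sqrt (2/3))) * (p * sqrt m / sqrt s)" by (simp add: field_simps)
  also have "sqrt 2 / sqrt (2/3) = sqrt 3"
    by (simp add: real_sqrt_divide[symmetric])
  finally show ?thesis .
qed

lemma ereal_term:
  fixes ph p mh m sh s :: real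
  assumes "0 \<le> p" "ph \<le> 4/3 * p" "0 \<le> ph" "0 \<le> m" "0 \<le> mh" "mh \<le> 2 * m" "0 \<le> s" "2/3 * s \<le> sh"
  shows "ereal (ph * sqrt mh) * inv_sqrt sh \<le> ereal (4/3 * sqrt 3) * (ereal (p * sqrt m) * inv_sqrt s)"
proof (cases "ph * sqrt mh = 0")
  case True
  have "0 \<le> ereal (p * sqrt m) * inv_sqrt s" using assms by (auto simp: inv_sqrt_def)
  then have nn: "0 \<le> ereal (4/3 * sqrt 3) * (ereal (p * sqrt m) * inv_sqrt s)" by simp
  have e: "ereal (ph * sqrt mh) * inv_sqrt sh = 0" using True by simp
  show ?thesis unfolding e by (rule nn)
next
  case False
  then have n1: "ph \<noteq> 0" and n2: "mh \<noteq> 0" by auto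
  have ph: "ph > 0" using n1 assms(3) by (simp add: order_less_le)
  have mh: "mh > 0" using n2 assms(5) by (simp add: order_less_le)
  have p: "p > 0" using ph assms(2) by linarith
  have m: "m > 0" using mh assms(6) by linarith
  show ?thesis
  proof (cases "s = 0")
    case True
    then show ?thesis using p m by (simp add: inv_sqrt_def)
  next
    case False
    then have s: "s > 0" using assms by auto
    then have sh: "sh > 0" using assms by linarith
    have "ph * sqrt mh / sqrt sh \<le> (4/3 * sqrt 3) * (p * sqrt m / sqrt s)"
      using real_term[OF assms(1-6) s assms(8)] .
    then show ?thesis using s sh by (simp add: inv_sqrt_def)
  qed
qed
lemma finstep:
  fixes X L :: ereal and c :: real
  assumes c: "c = 4/3 * sqrt 3" and X0: "0 \<le> X" and L0: "0 \<le> L" and XL: "X \<le> L * ereal c"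
  shows "X ^ 2 \<le> 8 * L ^ 2"
proof (cases L)
  case (real l)
  with L0 have l0: "0 \<le> l" by simp
  from XL real have Xl: "X \<le> ereal (l * c)" by simp
  from X0 Xl obtain x where x: "X = ereal x" "0 \<le> x" "x \<le> l * c"
    by (cases X) auto
  have cc: "c * c = 16/3" unfolding c by (simp add: algebra_simps)
  have "x * x \<le> (l * c) * (l * c)" using x by (intro mult_mono) auto
  also have "\<dots> = (16/3) * (l * l)" using cc by (simp add: algebra_simps)
  also have "\<dots> \<le> 8 * (l * l)" using l0 by simp
  finally have "x ^ 2 \<le> 8 * l ^ 2" by (simp add: power2_eq_square)
  then show ?thesis using x real by simp
next
  case PInf
  then show ?thesis by simp
next
  case MInf
  then show ?thesis using L0 by simp
qed

theorem lemma3: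
  fixes n :: nat
    and q :: "'s::finite \<Rightarrow> nat \<Rightarrow> real"
    and P Phat :: "intervention \<Rightarrow> 's \<Rightarrow> real"
    and mhat :: "'s \<Rightarrow> nat"
    and fhat :: "intervention \<Rightarrow> real"
  assumes n_pos: "1 \<le> n"
    and q_prob: "\<forall>i j. j < n \<longrightarrow> 0 \<le> q i j \<and> q i j \<le> 1"
    and P_nonneg: "\<forall>a\<in>interventions n. \<forall>i. 0 \<le> P a i"
    and P_stoch: "\<forall>a\<in>interventions n. (\<Sum>i\<in>UNIV. P a i) = 1"
    and Phat_nonneg: "\<forall>a\<in>interventions n. \<forall>i. 0 \<le> Phat a i"
    and Phat_supp: "\<forall>a\<in>interventions n. \<forall>i. P a i = 0 \<longrightarrow> Phat a i = 0"
    and E1: "\<forall>a\<in>interventions n.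
               (\<Sum>i\<in>UNIV. \<bar>Phat a i - P a i\<bar>) \<le> pplus (interventions n) P / 3"
    and E3: "\<forall>i. 2/3 * real (mpar (q i) n) \<le> real (mhat i)
               \<and> real (mhat i) \<le> 2 * real (mpar (q i) n)"
    and fhat_mem: "fhat \<in> freq_simplex (interventions n)"
    and fhat_opt: "obj (interventions n) Phat (\<lambda>i. real (mhat i)) fhat
                   = (INF f\<in>freq_simplex (interventions n).
                        obj (interventions n) Phat (\<lambda>i. real (mhat i)) f)"
  shows "(obj (interventions n) Phat (\<lambda>i. real (mhat i)) fhat) ^ 2
           \<le> 8 * lambda_par (interventions n) P (\<lambda>i. real (mpar (q i) n))"
proof -
  define I where "I = interventions n"
  define mh where "mh = (\<lambda>i. real (mhat i))"
  define m where "m = (\<lambda>i. real (mpar (q i) n))"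
  define c :: real where "c = 4/3 * sqrt 3"
  have c0: "0 < c" unfolding c_def by simp
  have finI: "finite I" unfolding I_def by (rule finite_interventions)
  have ObsI: "Obs \<in> I" unfolding I_def interventions_def by simp
  have pp: "pplus I P \<le> P a i" if "a \<in> I" "P a i > 0" for a i
  proof -
    define S where "S = {P a i | a i. a \<in> I \<and> P a i > 0}"
    have "S \<subseteq> (\<Union>a\<in>I. range (P a))" unfolding S_def by blast
    moreover have "finite (\<Union>a\<in>I. range (P a))" using finI by simp
    ultimately have fS: "finite S" by (rule finite_subset)
    have mem: "P a i \<in> S" unfolding S_def using that by blast
    have "Min S \<le> P a i" by (rule Min_le[OF fS mem])
    then show ?thesis unfolding pplus_def S_def .
  qed
  have bnd: "2/3 * P a i \<le> Phat a i \<and> Phat a i \<le> 4/3 * P a i" if a: "a \<in> I" for a i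
  proof (cases "P a i = 0")
    case True
    then show ?thesis using Phat_supp a unfolding I_def by auto
  next
    case False
    have "0 \<le> P a i" using P_nonneg a unfolding I_def by blast
    then have Ppos: "P a i > 0" using False by (simp add: order_less_le)
    have "\<bar>Phat a i - P a i\<bar> \<le> (\<Sum>i\<in>UNIV. \<bar>Phat a i - P a i\<bar>)"
      by (rule member_le_sum) auto
    also have "\<dots> \<le> pplus I P / 3" using E1 a unfolding I_def by auto
    also have "\<dots> \<le> P a i / 3" using pp[OF a Ppos] by simp
    finally show ?thesis by linarith
  qed
  have ptf: "0 \<le> PTf I P f i \<and> 2/3 * PTf I P f i \<le> PTf I Phat f i"
    if f: "f \<in> freq_simplex I" for f i
  proof -
    have fn: "\<forall>a\<in>I. 0 \<le> f a" using f unfolding freq_simplex_def by auto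
    have "0 \<le> PTf I P f i" unfolding PTf_def
      using fn P_nonneg unfolding I_def by (intro sum_nonneg) auto
    moreover have "2/3 * PTf I P f i \<le> PTf I Phat f i" unfolding PTf_def sum_distrib_left
    proof (rule sum_mono)
      fix a assume a: "a \<in> I"
      have "2/3 * (f a * P a i) = f a * (2/3 * P a i)" by simp
      also have "\<dots> \<le> f a * Phat a i" using bnd[OF a] fn a by (intro mult_left_mono) auto
      finally show "2/3 * (f a * P a i) \<le> f a * Phat a i" .
    qed
    ultimately show ?thesis by simp
  qed
  have mnn: "0 \<le> m i" "0 \<le> mh i" "mh i \<le> 2 * m i" for i
    using E3 unfolding m_def mh_def by auto
  have tnn: "0 \<le> ereal (P a i * sqrt (m i)) * inv_sqrt (PTf I P f i)" if "a \<in> I" for a i f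
    using P_nonneg that mnn unfolding I_def inv_sqrt_def by auto
  have thnn: "0 \<le> ereal (Phat a i * sqrt (mh i)) * inv_sqrt (PTf I Phat f i)" if "a \<in> I" for a i f
    using Phat_nonneg that mnn unfolding I_def inv_sqrt_def by auto
  have row: "\<bar>\<Sum>i\<in>UNIV. ereal (Phat a i * sqrt (mh i)) * inv_sqrt (PTf I Phat f i)\<bar>
      \<le> ereal c * \<bar>\<Sum>i\<in>UNIV. ereal (P a i * sqrt (m i)) * inv_sqrt (PTf I P f i)\<bar>"
    if f: "f \<in> freq_simplex I" and a: "a \<in> I" for f a
  proof -
    have s1: "0 \<le> (\<Sum>i\<in>UNIV. ereal (Phat a i * sqrt (mh i)) * inv_sqrt (PTf I Phat f i))"
      using thnn[OF a] by (intro sum_nonneg) auto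
    have s2: "0 \<le> (\<Sum>i\<in>UNIV. ereal (P a i * sqrt (m i)) * inv_sqrt (PTf I P f i))"
      using tnn[OF a] by (intro sum_nonneg) auto
    have "(\<Sum>i\<in>UNIV. ereal (Phat a i * sqrt (mh i)) * inv_sqrt (PTf I Phat f i))
        \<le> (\<Sum>i\<in>UNIV. ereal c * (ereal (P a i * sqrt (m i)) * inv_sqrt (PTf I P f i)))"
    proof (rule sum_mono)
      fix i :: 's
      have "0 \<le> P a i" using P_nonneg a unfolding I_def by auto
      then show "ereal (Phat a i * sqrt (mh i)) * inv_sqrt (PTf I Phat f i)
          \<le> ereal c * (ereal (P a i * sqrt (m i)) * inv_sqrt (PTf I P f i))"
        unfolding c_def
        using ereal_term[of "P a i" "Phat a i" "m i" "mh i" "PTf I P f i" "PTf I Phat f i"]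
          bnd[OF a, of i] mnn[of i] ptf[OF f, of i] Phat_nonneg a unfolding I_def by auto
    qed
    also have "\<dots> = ereal c * (\<Sum>i\<in>UNIV. ereal (P a i * sqrt (m i)) * inv_sqrt (PTf I P f i))"
      using tnn[OF a] by (intro sum_ereal_right_distrib[symmetric]) auto
    finally show ?thesis using s1 s2 by simp
  qed
  have objb: "obj I Phat mh f \<le> ereal c * obj I P m f" if f: "f \<in> freq_simplex I" for f
    unfolding obj_def
  proof (rule Max.boundedI)
    show "finite ((\<lambda>a. \<bar>\<Sum>i\<in>UNIV. ereal (Phat a i * sqrt (mh i)) * inv_sqrt (PTf I Phat f i)\<bar>) ` I)"
      using finI by simp
    show "(\<lambda>a. \<bar>\<Sum>i\<in>UNIV. ereal (Phat a i * sqrt (mh i)) * inv_sqrt (PTf I Phat f i)\<bar>) ` I \<noteq> {}"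
      using ObsI by auto
    fix y assume "y \<in> (\<lambda>a. \<bar>\<Sum>i\<in>UNIV. ereal (Phat a i * sqrt (mh i)) * inv_sqrt (PTf I Phat f i)\<bar>) ` I"
    then obtain a where a: "a \<in> I" and y: "y = \<bar>\<Sum>i\<in>UNIV. ereal (Phat a i * sqrt (mh i)) * inv_sqrt (PTf I Phat f i)\<bar>"
      by auto
    have "\<bar>\<Sum>i\<in>UNIV. ereal (P a i * sqrt (m i)) * inv_sqrt (PTf I P f i)\<bar>
        \<le> Max ((\<lambda>a. \<bar>\<Sum>i\<in>UNIV. ereal (P a i * sqrt (m i)) * inv_sqrt (PTf I P f i)\<bar>) ` I)"
      using finI a by (intro Max_ge) auto
    then have "ereal c * \<bar>\<Sum>i\<in>UNIV. ereal (P a i * sqrt (m i)) * inv_sqrt (PTf I P f i)\<bar>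
        \<le> ereal c * Max ((\<lambda>a. \<bar>\<Sum>i\<in>UNIV. ereal (P a i * sqrt (m i)) * inv_sqrt (PTf I P f i)\<bar>) ` I)"
      using c0 by (intro ereal_mult_left_mono) auto
    then show "y \<le> ereal c * Max ((\<lambda>a. \<bar>\<Sum>i\<in>UNIV. ereal (P a i * sqrt (m i)) * inv_sqrt (PTf I P f i)\<bar>) ` I)"
      using row[OF f a] y by simp
  qed
  define X where "X = obj I Phat mh fhat"
  define L where "L = (INF f\<in>freq_simplex I. obj I P m f)"
  have X0: "0 \<le> X"
  proof -
    have "\<bar>\<Sum>i\<in>UNIV. ereal (Phat Obs i * sqrt (mh i)) * inv_sqrt (PTf I Phat fhat i)\<bar> \<le> X"
      unfolding X_def obj_def using finI ObsI by (intro Max_ge) auto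
    then show ?thesis using order_trans abs_ereal_pos by blast
  qed
  have obj0: "0 \<le> obj I P m f" for f
  proof -
    have "\<bar>\<Sum>i\<in>UNIV. ereal (P Obs i * sqrt (m i)) * inv_sqrt (PTf I P f i)\<bar> \<le> obj I P m f"
      unfolding obj_def using finI ObsI by (intro Max_ge) auto
    then show ?thesis using order_trans abs_ereal_pos by blast
  qed
  have Xf: "X \<le> ereal c * obj I P m f" if f: "f \<in> freq_simplex I" for f
  proof -
    have "X \<le> obj I Phat mh f" unfolding X_def using fhat_opt f
      unfolding I_def mh_def by (simp add: INF_lower)
    then show ?thesis using objb[OF f] by simp
  qed
  have cinv: "ereal c * ereal (1/c) = 1" "ereal (1/c) * ereal c = 1" using c0 by (simp_all add: one_ereal_def)
  have Yf: "X * ereal (1/c) \<le> obj I P m f" if f: "f \<in> freq_simplex I" for f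
  proof -
    have "X * ereal (1/c) \<le> (ereal c * obj I P m f) * ereal (1/c)"
      using Xf[OF f] c0 by (intro ereal_mult_right_mono) auto
    also have "\<dots> = (ereal c * ereal (1/c)) * obj I P m f" by (simp only: mult_ac)
    also have "\<dots> = obj I P m f" by (simp only: cinv(1) mult_1)
    finally show ?thesis .
  qed
  have YL: "X * ereal (1/c) \<le> L" unfolding L_def by (rule INF_greatest) (rule Yf)
  have XL: "X \<le> L * ereal c"
  proof -
    have "X * ereal (1/c) * ereal c \<le> L * ereal c"
      using YL c0 by (intro ereal_mult_right_mono) auto
    moreover have "X * ereal (1/c) * ereal c = X" by (simp only: mult.assoc cinv(2) mult_1_right)
    ultimately show ?thesis by simp
  qed
  have L0: "0 \<le> L" unfolding L_def by (rule INF_greatest) (rule obj0)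
  have main: "X ^ 2 \<le> 8 * L ^ 2"
    by (rule finstep[OF c_def X0 L0 XL])
  then show ?thesis unfolding X_def L_def lambda_par_def I_def mh_def m_def .
qed

end
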